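(* Let $K$ be a clique simplicial complex, $X\cup Y=K_0$ a cover of its vertex set, $A:=X\cap Y$, and $P:=\{\sigma\in K\mid\sigma\subset X\text{ or }\sigma\subset Y\text{ or }\sigma\cap A\neq\emptyset\}$. Assume there are two elements $a_X,a_Y\in A$ such that: (i) for every edge $\tau\in K_1$ with $|\tau\cap A|=1$ and $|\tau\cap(X\setminus A)|=1$, the set $\tau\cup\{a_X\}$ is a simplex of $K$; (ii) for every edge $\tau\in K_1$ with $|\tau\cap A|=1$ and $|\tau\cap(Y\setminus A)|=1$, the set $\tau\cup\{a_Y\}$ is a simplex of $K$; (iii) for every edge $\tau\in K_1\setminus P$, the set $\tau\cup\{a_X,a_Y\}$ is a simplex of $K$. Then for every $\sigma\in K\setminus P$, the set $\{a_X,a_Y\}$ is a central simplex of $\mathrm{St}(\sigma,A)$, and the inclusion $K_X\cup K_Y\subset K$ is a weak equivalence.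
   Context: A simplicial complex is a collection of finite nonempty subsets of a fixed set closed under taking nonempty subsets; $K_0$ is its vertex set, $K_1$ its set of edges, $K_B$ the subcomplex of simplices contained in $B$. $K$ is clique if a set with at least two elements is a simplex iff all its two-element subsets are simplices. $\mathrm{St}(\sigma,A):=\{\mu\subset A\mid 0<|\mu|<\infty,\ \mu\cup\sigma\in K\}$. A simplex $\tau$ of a complex $L$ is central if $\sigma\cup\tau\in L$ for every simplex $\sigma$ of $L$. Homotopical notions refer to geometric realizations. *)

theory Defs
  imports "HOL-Analysis.Analysis"
begin

definition simplicial_complex :: "'a set set \<Rightarrow> bool" where
  "simplicial_complex K \<longleftrightarrow>
     (\<forall>\<sigma>\<in>K. finite \<sigma> \<and> \<sigma> \<noteq> {}) \<and>
     (\<forall>\<sigma>\<in>K. \<forall>\<tau>. \<tau> \<subseteq> \<sigma> \<and> \<tau> \<noteq> {} \<longrightarrow> \<tau> \<in> K)"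

definition vertices :: "'a set set \<Rightarrow> 'a set" where
  "vertices K = {v. {v} \<in> K}"

definition edges :: "'a set set \<Rightarrow> 'a set set" where
  "edges K = {\<sigma>\<in>K. card \<sigma> = 2}"

definition full_sub :: "'a set set \<Rightarrow> 'a set \<Rightarrow> 'a set set" where
  "full_sub K B = {\<sigma>\<in>K. \<sigma> \<subseteq> B}"

definition clique_complex :: "'a set set \<Rightarrow> bool" where
  "clique_complex K \<longleftrightarrow>
     (\<forall>\<sigma>. finite \<sigma> \<and> 2 \<le> card \<sigma> \<longrightarrow>
        (\<sigma> \<in> K \<longleftrightarrow> (\<forall>e. e \<subseteq> \<sigma> \<and> card e = 2 \<longrightarrow> e \<in> K)))"

definition St :: "'a set set \<Rightarrow> 'a set \<Rightarrow> 'a set \<Rightarrow> 'a set set" where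
  "St K \<sigma> A = {\<mu>. \<mu> \<subseteq> A \<and> finite \<mu> \<and> \<mu> \<noteq> {} \<and> \<mu> \<union> \<sigma> \<in> K}"

definition central_simplex :: "'a set set \<Rightarrow> 'a set \<Rightarrow> bool" where
  "central_simplex L \<tau> \<longleftrightarrow> \<tau> \<in> L \<and> (\<forall>\<sigma>\<in>L. \<sigma> \<union> \<tau> \<in> L)"

text \<open>Points: finitely supported barycentric coordinate functions whose support is a simplex.\<close>
definition realization_carrier :: "'a set set \<Rightarrow> ('a \<Rightarrow> real) set" where
  "realization_carrier K =
     {f. {v. f v \<noteq> 0} \<in> K \<and> (\<forall>v. 0 \<le> f v) \<and> sum f {v. f v \<noteq> 0} = 1}"

definition closed_simplex :: "'a set \<Rightarrow> ('a \<Rightarrow> real) set" where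
  "closed_simplex \<sigma> = {f. (\<forall>v. 0 \<le> f v) \<and> (\<forall>v. v \<notin> \<sigma> \<longrightarrow> f v = 0) \<and> sum f \<sigma> = 1}"

definition geometric_realization :: "'a set set \<Rightarrow> ('a \<Rightarrow> real) topology" where
  "geometric_realization K = topology (\<lambda>U. U \<subseteq> realization_carrier K \<and>
      (\<forall>\<sigma>\<in>K. openin (subtopology (powertop_real UNIV) (closed_simplex \<sigma>))
                    (U \<inter> closed_simplex \<sigma>)))"

definition sphere_base :: "nat \<Rightarrow> real" where
  "sphere_base = (\<lambda>i. if i = 0 then 1 else 0)"

text \<open>f induces a bijection on path components and, for every base point x and n \<ge> 1,
a bijection pi_n(X,x) \<rightarrow> pi_n(Y,f x) (pointed homotopy classes of maps from the n-sphere).\<close>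
definition weak_homotopy_equivalence ::
    "'a topology \<Rightarrow> 'b topology \<Rightarrow> ('a \<Rightarrow> 'b) \<Rightarrow> bool" where
  "weak_homotopy_equivalence X Y f \<longleftrightarrow>
     continuous_map X Y f \<and>
     (\<forall>y\<in>topspace Y. \<exists>x\<in>topspace X. path_component_of Y (f x) y) \<and>
     (\<forall>x1\<in>topspace X. \<forall>x2\<in>topspace X.
         path_component_of Y (f x1) (f x2) \<longrightarrow> path_component_of X x1 x2) \<and>
     (\<forall>n\<ge>1. \<forall>x\<in>topspace X.
        (\<forall>g. continuous_map (nsphere n) Y g \<and> g sphere_base = f x \<longrightarrow>
           (\<exists>h. continuous_map (nsphere n) X h \<and> h sphere_base = x \<and>
                homotopic_with (\<lambda>k. k sphere_base = f x) (nsphere n) Y (f \<circ> h) g)) \<and>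
        (\<forall>h1 h2. continuous_map (nsphere n) X h1 \<and> h1 sphere_base = x \<and>
                 continuous_map (nsphere n) X h2 \<and> h2 sphere_base = x \<and>
                 homotopic_with (\<lambda>k. k sphere_base = f x) (nsphere n) Y (f \<circ> h1) (f \<circ> h2)
                 \<longrightarrow> homotopic_with (\<lambda>k. k sphere_base = x) (nsphere n) X h1 h2))"

end

theory Submission
  imports Defs
begin

lemma sc_sub:
  assumes "simplicial_complex K" "\<tau> \<in> K" "\<rho> \<subseteq> \<tau>" "\<rho> \<noteq> {}" shows "\<rho> \<in> K"
  using assms unfolding simplicial_complex_def by blast

lemma sc_finite: "simplicial_complex K \<Longrightarrow> \<sigma> \<in> K \<Longrightarrow> finite \<sigma>"
  unfolding simplicial_complex_def by blast

lemma cs_supp_sub: "f \<in> closed_simplex \<sigma> \<Longrightarrow> {v. f v \<noteq> 0} \<subseteq> \<sigma>"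
  unfolding closed_simplex_def by auto

lemma cs_sum_supp:
  assumes "f \<in> closed_simplex \<sigma>" "finite \<sigma>" shows "sum f {v. f v \<noteq> 0} = 1"
proof -
  have "sum f \<sigma> = sum f {v. f v \<noteq> 0}"
    by (rule sum.mono_neutral_right) (use assms cs_supp_sub in auto)
  then show ?thesis using assms unfolding closed_simplex_def by auto
qed

lemma closed_simplex_sub:
  assumes "simplicial_complex K" "\<sigma> \<in> K"
  shows "closed_simplex \<sigma> \<subseteq> realization_carrier K"
proof
  fix f assume f: "f \<in> closed_simplex \<sigma>"
  have fin: "finite \<sigma>" using sc_finite assms by blast
  have s1: "sum f {v. f v \<noteq> 0} = 1" using cs_sum_supp f fin by blast
  then have "{v. f v \<noteq> 0} \<noteq> {}" by (metis sum.empty zero_neq_one)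
  then have "{v. f v \<noteq> 0} \<in> K" using sc_sub[OF assms cs_supp_sub[OF f]] by blast
  then show "f \<in> realization_carrier K" using f s1
    unfolding realization_carrier_def closed_simplex_def by auto
qed

lemma carrier_cs:
  assumes "f \<in> realization_carrier K" shows "f \<in> closed_simplex {v. f v \<noteq> 0}" "{v. f v \<noteq> 0} \<in> K"
  using assms unfolding realization_carrier_def closed_simplex_def by auto

lemma carrier_iff:
  assumes "simplicial_complex K"
  shows "f \<in> realization_carrier K \<longleftrightarrow> (\<exists>\<sigma>\<in>K. f \<in> closed_simplex \<sigma>)"
  using carrier_cs closed_simplex_sub[OF assms] by blast

abbreviation TS :: "'a set \<Rightarrow> ('a \<Rightarrow> real) topology" where
  "TS \<sigma> \<equiv> subtopology (powertop_real UNIV) (closed_simplex \<sigma>)"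

definition grp :: "'a set set \<Rightarrow> ('a \<Rightarrow> real) set \<Rightarrow> bool" where
  "grp K U \<longleftrightarrow> U \<subseteq> realization_carrier K \<and>
      (\<forall>\<sigma>\<in>K. openin (TS \<sigma>) (U \<inter> closed_simplex \<sigma>))"

lemma istop_grp: "istopology (grp K)"
proof -
  have 1: "grp K (S \<inter> T)" if "grp K S" "grp K T" for S T
    unfolding grp_def
  proof (intro conjI ballI)
    show "S \<inter> T \<subseteq> realization_carrier K" using that unfolding grp_def by blast
  next
    fix \<sigma> assume s: "\<sigma> \<in> K"
    have "S \<inter> T \<inter> closed_simplex \<sigma> = (S \<inter> closed_simplex \<sigma>) \<inter> (T \<inter> closed_simplex \<sigma>)" by blast
    then show "openin (TS \<sigma>) (S \<inter> T \<inter> closed_simplex \<sigma>)"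
      using that s unfolding grp_def by (simp add: openin_Int)
  qed
  have 2: "grp K (\<Union> KK)" if a: "\<forall>U\<in>KK. grp K U" for KK
    unfolding grp_def
  proof (intro conjI ballI)
    show "\<Union> KK \<subseteq> realization_carrier K" using a unfolding grp_def by blast
    fix \<sigma> assume "\<sigma> \<in> K"
    have "\<Union> KK \<inter> closed_simplex \<sigma> = \<Union> ((\<lambda>U. U \<inter> closed_simplex \<sigma>) ` KK)" by blast
    show "openin (TS \<sigma>) (\<Union> KK \<inter> closed_simplex \<sigma>)"
    proof -
      have "\<forall>V \<in> (\<lambda>U. U \<inter> closed_simplex \<sigma>) ` KK. openin (TS \<sigma>) V"
        using a \<open>\<sigma> \<in> K\<close> unfolding grp_def by blast
      then show ?thesis using \<open>\<Union> KK \<inter> closed_simplex \<sigma> = _\<close> openin_Union by metis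
    qed
  qed
  show ?thesis unfolding istopology_def using 1 2 by blast
qed

lemma openin_gr: "openin (geometric_realization K) U \<longleftrightarrow> grp K U"
proof -
  have "geometric_realization K = topology (grp K)"
    by (simp add: geometric_realization_def grp_def[abs_def])
  then show ?thesis using topology_inverse'[OF istop_grp[of K]] by simp
qed

lemma topspace_gr:
  assumes "simplicial_complex K"
  shows "topspace (geometric_realization K) = realization_carrier K"
proof -
  have "grp K (realization_carrier K)"
    unfolding grp_def using closed_simplex_sub[OF assms]
    by (auto simp: inf.absorb2 openin_subtopology_refl)
  then have "realization_carrier K \<subseteq> topspace (geometric_realization K)"
    using openin_gr openin_subset by metis
  moreover have "topspace (geometric_realization K) \<subseteq> realization_carrier K"
    using openin_gr[of K "topspace (geometric_realization K)"] unfolding grp_def by auto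
  ultimately show ?thesis by blast
qed

lemma proj_cont: "continuous_map (powertop_real UNIV) euclideanreal (\<lambda>f. f v)"
  by (rule continuous_map_product_projection) simp

lemma closed_cs:
  assumes "finite \<sigma>" shows "closedin (powertop_real UNIV) (closed_simplex \<sigma>)"
proof -
  have c1: "closedin (powertop_real UNIV) {f \<in> topspace (powertop_real UNIV). f v \<in> (if v \<in> \<sigma> then {0..} else {0})}" for v
    by (rule closedin_continuous_map_preimage[OF proj_cont]) simp
  have cs: "continuous_map (powertop_real UNIV) euclideanreal (\<lambda>f. sum f \<sigma>)"
    using assms by (intro continuous_map_sum proj_cont)
  have c3: "closedin (powertop_real UNIV) {f \<in> topspace (powertop_real UNIV). sum f \<sigma> \<in> {1}}"
    by (rule closedin_continuous_map_preimage[OF cs]) simp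
  have eq: "closed_simplex \<sigma> = (\<Inter>v. {f \<in> topspace (powertop_real UNIV). f v \<in> (if v \<in> \<sigma> then {0..} else {0})})
       \<inter> {f \<in> topspace (powertop_real UNIV). sum f \<sigma> \<in> {1}}"
    unfolding closed_simplex_def by (auto split: if_splits) (metis order_refl)
  show ?thesis unfolding eq
  proof (intro closedin_Int closedin_Inter c3)
    show "\<And>S. S \<in> range (\<lambda>v. {f \<in> topspace (powertop_real UNIV). f v \<in> (if v \<in> \<sigma> then {0..} else {0})}) \<Longrightarrow>
         closedin (powertop_real UNIV) S" using c1 by blast
  qed simp
qed

lemma cont_into_gr:
  assumes K: "simplicial_complex K" and T: "finite T" "T \<subseteq> K"
    and c: "continuous_map Z (powertop_real UNIV) \<phi>"
    and im: "\<And>z. z \<in> topspace Z \<Longrightarrow> \<exists>\<tau>\<in>T. \<phi> z \<in> closed_simplex \<tau>"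
  shows "continuous_map Z (geometric_realization K) \<phi>"
  unfolding continuous_map_closedin
proof (intro conjI allI impI)
  show "\<phi> \<in> topspace Z \<rightarrow> topspace (geometric_realization K)"
    using im closed_simplex_sub[OF K] T topspace_gr[OF K] by blast
  fix C assume C: "closedin (geometric_realization K) C"
  let ?U = "realization_carrier K - C"
  have Csub: "C \<subseteq> realization_carrier K" using C closedin_subset topspace_gr[OF K] by metis
  have "openin (geometric_realization K) ?U"
    using C topspace_gr[OF K] by (metis closedin_def)
  then have U: "grp K ?U" using openin_gr by blast
  have cl: "closedin (powertop_real UNIV) (C \<inter> closed_simplex \<tau>)" if "\<tau> \<in> T" for \<tau>
  proof -
    have tK: "\<tau> \<in> K" using that T by blast
    have o: "openin (TS \<tau>) (?U \<inter> closed_simplex \<tau>)" using U tK unfolding grp_def by blast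
    have "closedin (TS \<tau>) (topspace (TS \<tau>) - (?U \<inter> closed_simplex \<tau>))"
      by (rule closedin_diff[OF closedin_topspace o])
    moreover have "topspace (TS \<tau>) - (?U \<inter> closed_simplex \<tau>) = C \<inter> closed_simplex \<tau>"
      using closed_simplex_sub[OF K tK] Csub by auto
    ultimately have "closedin (TS \<tau>) (C \<inter> closed_simplex \<tau>)" by simp
    then show ?thesis
      using closedin_trans_full closed_cs sc_finite[OF K tK] by blast
  qed
  have "{x \<in> topspace Z. \<phi> x \<in> C} = (\<Union>\<tau>\<in>T. {x \<in> topspace Z. \<phi> x \<in> C \<inter> closed_simplex \<tau>})"
    using im by blast
  moreover have "closedin Z (\<Union>\<tau>\<in>T. {x \<in> topspace Z. \<phi> x \<in> C \<inter> closed_simplex \<tau>})"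
  proof (rule closedin_Union)
    show "finite ((\<lambda>\<tau>. {x \<in> topspace Z. \<phi> x \<in> C \<inter> closed_simplex \<tau>}) ` T)" using T(1) by simp
    have "\<forall>\<tau>\<in>T. closedin Z {x \<in> topspace Z. \<phi> x \<in> C \<inter> closed_simplex \<tau>}"
      using closedin_continuous_map_preimage[OF c cl] by blast
    then show "\<And>S. S \<in> (\<lambda>\<tau>. {x \<in> topspace Z. \<phi> x \<in> C \<inter> closed_simplex \<tau>}) ` T \<Longrightarrow> closedin Z S"
      by blast
  qed
  ultimately show "closedin Z {x \<in> topspace Z. \<phi> x \<in> C}" by simp
qed

lemma cont_out_gr:
  assumes K: "simplicial_complex K"
    and c: "\<And>\<sigma>. \<sigma> \<in> K \<Longrightarrow> continuous_map (TS \<sigma>) Z \<phi>"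
    and im: "\<And>x. x \<in> realization_carrier K \<Longrightarrow> \<phi> x \<in> topspace Z"
  shows "continuous_map (geometric_realization K) Z \<phi>"
  unfolding continuous_map_def
proof (intro conjI allI impI)
  show "\<phi> \<in> topspace (geometric_realization K) \<rightarrow> topspace Z" using im topspace_gr[OF K] by auto
  fix U assume U: "openin Z U"
  show "openin (geometric_realization K) {x \<in> topspace (geometric_realization K). \<phi> x \<in> U}"
    unfolding openin_gr grp_def topspace_gr[OF K]
  proof (intro conjI ballI)
    show "{x \<in> realization_carrier K. \<phi> x \<in> U} \<subseteq> realization_carrier K" by blast
    fix \<sigma> assume s: "\<sigma> \<in> K"
    have "{x \<in> realization_carrier K. \<phi> x \<in> U} \<inter> closed_simplex \<sigma> = {x \<in> topspace (TS \<sigma>). \<phi> x \<in> U}"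
      using closed_simplex_sub[OF K s] by auto
    then show "openin (TS \<sigma>) ({x \<in> realization_carrier K. \<phi> x \<in> U} \<inter> closed_simplex \<sigma>)"
      using openin_continuous_map_preimage[OF c[OF s] U] by simp
  qed
qed

lemma topspace_TS[simp]: "topspace (TS \<sigma>) = closed_simplex \<sigma>"
  by simp

lemma cont_out_gr_prod:
  assumes K: "simplicial_complex K"
    and c: "\<And>\<sigma>. \<sigma> \<in> K \<Longrightarrow> continuous_map (prod_topology (top_of_set {0..1::real}) (TS \<sigma>)) Z \<phi>"
    and im: "\<And>t x. t \<in> {0..1} \<Longrightarrow> x \<in> realization_carrier K \<Longrightarrow> \<phi> (t,x) \<in> topspace Z"
  shows "continuous_map (prod_topology (top_of_set {0..1::real}) (geometric_realization K)) Z \<phi>"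
  unfolding continuous_map_def
proof (intro conjI allI impI)
  show "\<phi> \<in> topspace (prod_topology (top_of_set {0..1}) (geometric_realization K)) \<rightarrow> topspace Z"
    using im by (auto simp: topspace_gr[OF K])
  fix U assume U: "openin Z U"
  define W where "W = {x \<in> {0..1} \<times> realization_carrier K. \<phi> x \<in> U}"
  have Weq: "{x \<in> topspace (prod_topology (top_of_set {0..1::real}) (geometric_realization K)). \<phi> x \<in> U} = W"
    unfolding W_def by (simp add: topspace_gr[OF K])
  have Ws: "openin (prod_topology (top_of_set {0..1::real}) (TS \<sigma>)) {x \<in> {0..1} \<times> closed_simplex \<sigma>. \<phi> x \<in> U}"
    if "\<sigma> \<in> K" for \<sigma>
    using openin_continuous_map_preimage[OF c[OF that] U] by simp
  have "openin (prod_topology (top_of_set {0..1}) (geometric_realization K)) W"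
    unfolding openin_prod_topology_alt
  proof (intro allI impI)
    fix t0 p0 assume tp: "(t0, p0) \<in> W"
    then have t0: "t0 \<in> {0..1}" and p0: "p0 \<in> realization_carrier K" and pu: "\<phi> (t0,p0) \<in> U"
      unfolding W_def by auto
    define \<sigma>0 where "\<sigma>0 = {v. p0 v \<noteq> 0}"
    have s0K: "\<sigma>0 \<in> K" and p0s: "p0 \<in> closed_simplex \<sigma>0"
      using carrier_cs[OF p0] unfolding \<sigma>0_def by auto
    define W0 where "W0 = {x \<in> {0..1} \<times> closed_simplex \<sigma>0. \<phi> x \<in> U}"
    have oW0: "openin (prod_topology (top_of_set {0..1::real}) (TS \<sigma>0)) W0"
      unfolding W0_def by (rule Ws[OF s0K])
    have hW0: "(t0,p0) \<in> W0" using t0 p0s pu unfolding W0_def by simp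
    have "\<exists>A B. openin (top_of_set {0..1}) A \<and> openin (TS \<sigma>0) B \<and> t0 \<in> A \<and> p0 \<in> B \<and> A \<times> B \<subseteq> W0"
      by (rule openin_prod_topology_alt[THEN iffD1, OF oW0, rule_format, OF hW0])
    then obtain U0 V0 where U0: "openin (top_of_set {0..1}) U0" and "openin (TS \<sigma>0) V0"
      and t0U0: "t0 \<in> U0" and "p0 \<in> V0" and U0V0: "U0 \<times> V0 \<subseteq> W0"
      by blast
    have "\<exists>e>0. \<forall>x'\<in>{0..1}. dist x' t0 < e \<longrightarrow> x' \<in> U0"
      using U0 t0U0 unfolding openin_euclidean_subtopology_iff by blast
    then obtain \<delta> where d: "\<delta> > 0" and dU: "\<And>t. t \<in> {0..1} \<Longrightarrow> dist t t0 < \<delta> \<Longrightarrow> t \<in> U0"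
      by blast
    define C where "C = cball t0 (\<delta>/2) \<inter> {0..1::real}"
    have cC: "compactin (top_of_set {0..1::real}) C"
      unfolding C_def compactin_subtopology compactin_euclidean_iff
      by (simp add: compact_Int_closed)
    have CU0: "C \<subseteq> U0" using dU d unfolding C_def by (auto simp: dist_commute)
    define V where "V = {p \<in> realization_carrier K. \<forall>t\<in>C. \<phi> (t,p) \<in> U}"
    have oV: "openin (geometric_realization K) V"
      unfolding openin_gr grp_def
    proof (intro conjI ballI)
      show "V \<subseteq> realization_carrier K" unfolding V_def by blast
      fix \<sigma> assume sK: "\<sigma> \<in> K"
      define Wsg where "Wsg = {x \<in> {0..1} \<times> closed_simplex \<sigma>. \<phi> x \<in> U}"
      have oWs: "openin (prod_topology (top_of_set {0..1::real}) (TS \<sigma>)) Wsg"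
        unfolding Wsg_def by (rule Ws[OF sK])
      have "\<forall>p\<in>V \<inter> closed_simplex \<sigma>. \<exists>T. openin (TS \<sigma>) T \<and> p \<in> T \<and> T \<subseteq> V \<inter> closed_simplex \<sigma>"
      proof
        fix p assume p: "p \<in> V \<inter> closed_simplex \<sigma>"
        have "C \<times> {p} \<subseteq> Wsg" using p unfolding V_def C_def Wsg_def by auto
        moreover have "p \<in> topspace (TS \<sigma>)" using p by simp
        ultimately obtain U1 V1 where "openin (TS \<sigma>) V1" "p \<in> V1" "C \<subseteq> U1" "U1 \<times> V1 \<subseteq> Wsg"
          using tube_lemma_left[OF oWs cC] by metis
        then have CV1: "C \<times> V1 \<subseteq> Wsg" by blast
        have "V1 \<subseteq> V \<inter> closed_simplex \<sigma>"
        proof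
          fix q assume q: "q \<in> V1"
          then have qs: "q \<in> closed_simplex \<sigma>"
            using openin_subset[OF \<open>openin (TS \<sigma>) V1\<close>] by auto
          have "\<phi> (t,q) \<in> U" if "t \<in> C" for t
            using CV1 q that unfolding Wsg_def by auto
          then show "q \<in> V \<inter> closed_simplex \<sigma>"
            unfolding V_def using qs closed_simplex_sub[OF K sK] by auto
        qed
        then show "\<exists>T. openin (TS \<sigma>) T \<and> p \<in> T \<and> T \<subseteq> V \<inter> closed_simplex \<sigma>"
          using \<open>openin (TS \<sigma>) V1\<close> \<open>p \<in> V1\<close> by blast
      qed
      then show "openin (TS \<sigma>) (V \<inter> closed_simplex \<sigma>)"
        by (subst openin_subopen) blast
    qed
    have "\<phi> (t,p0) \<in> U" if t: "t \<in> C" for t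
    proof -
      have "(t,p0) \<in> U0 \<times> V0" using CU0 t \<open>p0 \<in> V0\<close> by blast
      then have "(t,p0) \<in> W0" using U0V0 by (rule subsetD[rotated])
      then show ?thesis unfolding W0_def by simp
    qed
    then have p0V: "p0 \<in> V"
      unfolding V_def using p0 by simp
    define U' where "U' = ball t0 (\<delta>/2) \<inter> {0..1::real}"
    have oU': "openin (top_of_set {0..1::real}) U'"
      unfolding U'_def by (metis Int_commute open_ball openin_open_Int)
    have "t0 \<in> U'" unfolding U'_def using d t0 by auto
    moreover have "U' \<times> V \<subseteq> W"
    proof
      fix x assume "x \<in> U' \<times> V"
      then obtain t p where x: "x = (t,p)" "t \<in> U'" "p \<in> V" by blast
      then have "t \<in> C" unfolding U'_def C_def by auto
      then show "x \<in> W"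
        using x unfolding V_def U'_def W_def by auto
    qed
    ultimately show "\<exists>A B. openin (top_of_set {0..1}) A \<and> openin (geometric_realization K) B \<and>
                 t0 \<in> A \<and> p0 \<in> B \<and> A \<times> B \<subseteq> W"
      using oU' oV p0V by blast
  qed
  then show "openin (prod_topology (top_of_set {0..1}) (geometric_realization K))
     {x \<in> topspace (prod_topology (top_of_set {0..1}) (geometric_realization K)). \<phi> x \<in> U}"
    unfolding Weq .
qed

definition hh :: "real \<Rightarrow> real \<Rightarrow> real \<Rightarrow> real" where
  "hh a m n = a * (max 0 (m - n) / m)"

lemma hh_bound:
  assumes "0 \<le> a" "a \<le> m" "0 \<le> n" shows "\<bar>hh a m n\<bar> \<le> \<bar>a\<bar>"
proof (cases "m = 0")
  case True then show ?thesis by (simp add: hh_def)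
next
  case False
  then have m: "m > 0" using assms by auto
  have q0: "0 \<le> max 0 (m - n) / m" and q1: "max 0 (m - n) / m \<le> 1" using m assms by (auto simp: field_simps)
  have "a * (max 0 (m - n) / m) \<le> a" by (metis mult_left_le q1 assms(1))
  moreover have "0 \<le> a * (max 0 (m - n) / m)" by (metis mult_nonneg_nonneg q0 assms(1))
  ultimately show ?thesis unfolding hh_def using assms by linarith
qed

lemma hh_nonneg: "0 \<le> a \<Longrightarrow> 0 \<le> m \<Longrightarrow> 0 \<le> hh a m n"
  unfolding hh_def by simp

lemma hh_cont:
  assumes ca: "continuous_map Z euclideanreal a" and cm: "continuous_map Z euclideanreal m"
    and cn: "continuous_map Z euclideanreal n"
    and b: "\<And>z. z \<in> topspace Z \<Longrightarrow> 0 \<le> a z \<and> a z \<le> m z \<and> 0 \<le> n z"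
  shows "continuous_map Z euclideanreal (\<lambda>z. hh (a z) (m z) (n z))"
  unfolding continuous_map_atin limitin_canonical_iff
proof
  fix z0 assume z0: "z0 \<in> topspace Z"
  have ta: "(a \<longlongrightarrow> a z0) (atin Z z0)" using ca z0 unfolding continuous_map_atin by auto
  have tm: "(m \<longlongrightarrow> m z0) (atin Z z0)" using cm z0 unfolding continuous_map_atin by auto
  have tn: "(n \<longlongrightarrow> n z0) (atin Z z0)" using cn z0 unfolding continuous_map_atin by auto
  show "((\<lambda>z. hh (a z) (m z) (n z)) \<longlongrightarrow> hh (a z0) (m z0) (n z0)) (atin Z z0)"
  proof (cases "m z0 = 0")
    case False
    then show ?thesis unfolding hh_def
      by (intro tendsto_intros ta tm tn)
  next
    case True
    then have a0: "a z0 = 0" using b[OF z0] by auto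
    then have h0: "hh (a z0) (m z0) (n z0) = 0" by (simp add: hh_def)
    have ev: "eventually (\<lambda>z. norm (hh (a z) (m z) (n z)) \<le> norm (a z) * 1) (atin Z z0)"
      unfolding eventually_atin using hh_bound b by (auto intro!: exI[of _ "topspace Z"])
    show ?thesis unfolding h0
      by (rule tendsto_0_le[OF _ ev]) (use ta a0 in simp)
  qed
qed

locale pdata =
  fixes K :: "'a set set" and X Y :: "'a set" and aX aY :: 'a
  assumes sc: "simplicial_complex K" and cl: "clique_complex K"
    and cov: "X \<union> Y = vertices K"
    and aX: "aX \<in> X \<inter> Y" and aY: "aY \<in> X \<inter> Y"
    and c1: "\<And>\<tau>. \<tau> \<in> edges K \<Longrightarrow> card (\<tau> \<inter> (X \<inter> Y)) = 1 \<Longrightarrow>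
            card (\<tau> \<inter> (X - (X \<inter> Y))) = 1 \<Longrightarrow> \<tau> \<union> {aX} \<in> K"
    and c2: "\<And>\<tau>. \<tau> \<in> edges K \<Longrightarrow> card (\<tau> \<inter> (X \<inter> Y)) = 1 \<Longrightarrow>
            card (\<tau> \<inter> (Y - (X \<inter> Y))) = 1 \<Longrightarrow> \<tau> \<union> {aY} \<in> K"
    and c3: "\<And>\<tau>. \<tau> \<in> edges K - {\<sigma>\<in>K. \<sigma> \<subseteq> X \<or> \<sigma> \<subseteq> Y \<or> \<sigma> \<inter> (X \<inter> Y) \<noteq> {}} \<Longrightarrow>
            \<tau> \<union> {aX, aY} \<in> K"
begin

lemma vert: "\<sigma> \<in> K \<Longrightarrow> v \<in> \<sigma> \<Longrightarrow> v \<in> X \<union> Y"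
  using sc_sub[OF sc, of \<sigma> "{v}"] cov unfolding vertices_def by auto

lemma e1:
  assumes "x \<in> X - Y" "y \<in> Y - X" "{x,y} \<in> K" shows "{x,y} \<union> {aX,aY} \<in> K"
proof (rule c3)
  have "x \<noteq> y" using assms by auto
  then have "card {x,y} = 2" by simp
  then have "{x,y} \<in> edges K" using assms unfolding edges_def by auto
  moreover have "{x,y} \<notin> {\<sigma>\<in>K. \<sigma> \<subseteq> X \<or> \<sigma> \<subseteq> Y \<or> \<sigma> \<inter> (X \<inter> Y) \<noteq> {}}"
    using assms by auto
  ultimately show "{x,y} \<in> edges K - {\<sigma>\<in>K. \<sigma> \<subseteq> X \<or> \<sigma> \<subseteq> Y \<or> \<sigma> \<inter> (X \<inter> Y) \<noteq> {}}" by blast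
qed

lemma e2:
  assumes "u \<in> X \<inter> Y" "x \<in> X - Y" "{u,x} \<in> K" shows "{u,x} \<union> {aX} \<in> K"
proof (rule c1)
  have "u \<noteq> x" using assms by auto
  then have "card {u,x} = 2" by simp
  then show "{u,x} \<in> edges K" using assms unfolding edges_def by auto
  have "{u,x} \<inter> (X \<inter> Y) = {u}" using assms by auto
  then show "card ({u,x} \<inter> (X \<inter> Y)) = 1" by simp
  have "{u,x} \<inter> (X - (X \<inter> Y)) = {x}" using assms by auto
  then show "card ({u,x} \<inter> (X - (X \<inter> Y))) = 1" by simp
qed

lemma e3:
  assumes "u \<in> X \<inter> Y" "y \<in> Y - X" "{u,y} \<in> K" shows "{u,y} \<union> {aY} \<in> K"
proof (rule c2)
  have "u \<noteq> y" using assms by auto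
  then have "card {u,y} = 2" by simp
  then show "{u,y} \<in> edges K" using assms unfolding edges_def by auto
  have "{u,y} \<inter> (X \<inter> Y) = {u}" using assms by auto
  then show "card ({u,y} \<inter> (X \<inter> Y)) = 1" by simp
  have "{u,y} \<inter> (Y - (X \<inter> Y)) = {y}" using assms by auto
  then show "card ({u,y} \<inter> (Y - (X \<inter> Y))) = 1" by simp
qed

lemma sub2:
  assumes "\<tau> \<in> K" "u \<in> \<tau>" "w \<in> \<tau>" shows "{u,w} \<in> K"
  by (rule sc_sub[OF sc assms(1)]) (use assms in auto)

lemma key:
  assumes s: "\<sigma> \<in> K" and x: "x \<in> \<sigma>" "x \<in> X - Y" and y: "y \<in> \<sigma>" "y \<in> Y - X"
  shows "\<sigma> \<union> {aX,aY} \<in> K"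
proof -
  have pair: "{u,w} \<in> K" if "u \<in> \<sigma>" "w \<in> \<sigma>" for u w
    using sub2[OF s that] .
  have xyK: "{x,y} \<union> {aX,aY} \<in> K" using e1[OF x(2) y(2) pair[OF x(1) y(1)]] .
  have aXY: "{aX,aY} \<in> K" using sub2[OF xyK, of aX aY] by simp
  have ua: "{u,aX} \<in> K \<and> {u,aY} \<in> K" if u: "u \<in> \<sigma>" for u
  proof -
    have "u \<in> X \<union> Y" using vert s u by blast
    then consider "u \<in> X - Y" | "u \<in> Y - X" | "u \<in> X \<inter> Y" by blast
    then show ?thesis
    proof cases
      case 1
      have h: "{u,y} \<union> {aX,aY} \<in> K" using e1[OF 1 y(2) pair[OF u y(1)]] .
      show ?thesis using sub2[OF h, of u aX] sub2[OF h, of u aY] by simp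
    next
      case 2
      have h: "{x,u} \<union> {aX,aY} \<in> K" using e1[OF x(2) 2 pair[OF x(1) u]] .
      show ?thesis using sub2[OF h, of u aX] sub2[OF h, of u aY] by simp
    next
      case 3
      have h1: "{u,x} \<union> {aX} \<in> K" using e2[OF 3 x(2) pair[OF u x(1)]] .
      have h2: "{u,y} \<union> {aY} \<in> K" using e3[OF 3 y(2) pair[OF u y(1)]] .
      show ?thesis using sub2[OF h1, of u aX] sub2[OF h2, of u aY] by simp
    qed
  qed
  let ?\<rho> = "\<sigma> \<union> {aX,aY}"
  have fin: "finite ?\<rho>" using sc_finite[OF sc s] by simp
  have "x \<noteq> y" using x y by auto
  then have "card {x,y} = 2" by simp
  moreover have "card {x,y} \<le> card ?\<rho>" using fin x y by (intro card_mono) auto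
  ultimately have c2: "2 \<le> card ?\<rho>" by simp
  have "\<forall>e. e \<subseteq> ?\<rho> \<and> card e = 2 \<longrightarrow> e \<in> K"
  proof (intro allI impI)
    fix e assume e: "e \<subseteq> ?\<rho> \<and> card e = 2"
    then obtain p q where pq: "e = {p,q}" "p \<noteq> q" by (meson card_2_iff)
    have p: "p \<in> \<sigma> \<or> p = aX \<or> p = aY" and q: "q \<in> \<sigma> \<or> q = aX \<or> q = aY" using e pq by auto
    show "e \<in> K"
    proof (cases "p \<in> \<sigma>")
      case pT: True
      show ?thesis
      proof (cases "q \<in> \<sigma>")
        case True then show ?thesis using pair[OF pT True] pq(1) by simp
      next
        case False then have "q = aX \<or> q = aY" using q by simp
        then show ?thesis using ua[OF pT] pq(1) by blast
      qed
    next
      case False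
      then have pa: "p = aX \<or> p = aY" using p by simp
      show ?thesis
      proof (cases "q \<in> \<sigma>")
        case True
        have "e = {q,p}" using pq(1) by (simp add: insert_commute)
        then show ?thesis using ua[OF True] pa by blast
      next
        case False then have qa: "q = aX \<or> q = aY" using q by simp
        have "e = {aX,aY}"
          using pa qa pq by (elim disjE) (simp_all add: insert_commute)
        then show ?thesis using aXY by simp
      qed
    qed
  qed
  then show ?thesis using cl fin c2 unfolding clique_complex_def by blast
qed

lemma central_part:
  assumes "\<sigma> \<in> K - {\<sigma>\<in>K. \<sigma> \<subseteq> X \<or> \<sigma> \<subseteq> Y \<or> \<sigma> \<inter> (X \<inter> Y) \<noteq> {}}"
  shows "central_simplex (St K \<sigma> (X \<inter> Y)) {aX, aY}"
proof -
  have s: "\<sigma> \<in> K" and nX: "\<not> \<sigma> \<subseteq> X" and nY: "\<not> \<sigma> \<subseteq> Y" using assms by auto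
  obtain y where y: "y \<in> \<sigma>" "y \<notin> X" using nX by blast
  obtain x where x: "x \<in> \<sigma>" "x \<notin> Y" using nY by blast
  have "y \<in> Y - X" "x \<in> X - Y" using vert[OF s] x y by blast+
  have xX: "x \<in> X - Y" and yY: "y \<in> Y - X" by fact+
  have "\<sigma> \<union> {aX,aY} \<in> K" using key[OF s x(1) xX y(1) yY] .
  then have "{aX,aY} \<union> \<sigma> \<in> K" by (simp add: Un_commute)
  then have "{aX,aY} \<in> St K \<sigma> (X \<inter> Y)"
    unfolding St_def using aX aY by auto
  moreover have "\<mu> \<union> {aX,aY} \<in> St K \<sigma> (X \<inter> Y)" if "\<mu> \<in> St K \<sigma> (X \<inter> Y)" for \<mu>
  proof -
    have m: "\<mu> \<subseteq> X \<inter> Y" "finite \<mu>" "\<mu> \<union> \<sigma> \<in> K" using that unfolding St_def by auto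
    have "(\<mu> \<union> \<sigma>) \<union> {aX,aY} \<in> K"
      by (rule key[OF m(3) _ xX _ yY]) (use x y in auto)
    then have "(\<mu> \<union> {aX,aY}) \<union> \<sigma> \<in> K" by (simp add: Un_ac)
    then show ?thesis using m aX aY unfolding St_def by auto
  qed
  ultimately show ?thesis unfolding central_simplex_def by blast
qed

end

lemma cs_nonneg: "f \<in> closed_simplex \<sigma> \<Longrightarrow> 0 \<le> f v"
  unfolding closed_simplex_def by auto

lemma cs_out: "f \<in> closed_simplex \<sigma> \<Longrightarrow> v \<notin> \<sigma> \<Longrightarrow> f v = 0"
  unfolding closed_simplex_def by auto

lemma cs_sum: "f \<in> closed_simplex \<sigma> \<Longrightarrow> sum f \<sigma> = 1"
  unfolding closed_simplex_def by auto

lemma cs_shrink: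
  assumes "f \<in> closed_simplex \<tau>" "finite \<tau>" "\<rho> \<subseteq> \<tau>" "\<And>v. v \<in> \<tau> \<Longrightarrow> v \<notin> \<rho> \<Longrightarrow> f v = 0"
  shows "f \<in> closed_simplex \<rho>"
proof -
  have "sum f \<rho> = sum f \<tau>"
    by (rule sum.mono_neutral_left) (use assms in auto)
  then show ?thesis using assms unfolding closed_simplex_def by auto
qed

lemma cs_grow:
  assumes "f \<in> closed_simplex \<sigma>" "finite \<tau>" "\<sigma> \<subseteq> \<tau>"
  shows "f \<in> closed_simplex \<tau>"
proof -
  have "sum f \<sigma> = sum f \<tau>"
    by (rule sum.mono_neutral_left) (use assms cs_out in auto)
  then show ?thesis using assms unfolding closed_simplex_def by auto
qed

lemma cs_convex:
  assumes "f \<in> closed_simplex \<tau>" "g \<in> closed_simplex \<tau>" "t \<in> {0..1::real}"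
  shows "(\<lambda>v. f v + t * (g v - f v)) \<in> closed_simplex \<tau>"
proof -
  have nn: "0 \<le> f v + t * (g v - f v)" for v
  proof -
    have "f v + t * (g v - f v) = (1 - t) * f v + t * g v" by (simp add: algebra_simps)
    moreover have "0 \<le> (1 - t) * f v + t * g v"
      using assms cs_nonneg[OF assms(1), of v] cs_nonneg[OF assms(2), of v] by simp
    ultimately show ?thesis by simp
  qed
  have "(\<Sum>v\<in>\<tau>. t * (g v - f v)) = t * (\<Sum>v\<in>\<tau>. g v - f v)"
    by (simp add: sum_distrib_left)
  then have "sum (\<lambda>v. f v + t * (g v - f v)) \<tau> = sum f \<tau> + t * (sum g \<tau> - sum f \<tau>)"
    by (simp add: sum.distrib sum_subtractf)
  also have "\<dots> = 1" using cs_sum[OF assms(1)] cs_sum[OF assms(2)] by simp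
  finally show ?thesis using nn assms cs_out unfolding closed_simplex_def by auto
qed

lemma sum_split3:
  assumes "finite \<tau>" "A \<inter> B = {}"
  shows "sum g \<tau> = sum g (\<tau> \<inter> A) + sum g (\<tau> \<inter> B) + sum g (\<tau> - A - B)"
proof -
  have "sum g \<tau> = sum g (\<tau> \<inter> A) + sum g (\<tau> - A)" using assms(1) by (rule sum.Int_Diff)
  moreover have "sum g (\<tau> - A) = sum g ((\<tau> - A) \<inter> B) + sum g (\<tau> - A - B)"
    using assms(1) by (intro sum.Int_Diff) simp
  moreover have "(\<tau> - A) \<inter> B = \<tau> \<inter> B" using assms(2) by blast
  ultimately show ?thesis by (simp add: add.assoc)
qed

lemma mult_hh: fixes m n :: real assumes "0 \<le> m" "0 \<le> n" shows "m * (max 0 (m - n) / m) = max 0 (m - n)"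
proof (cases "m = 0")
  case True
  then have "m - n \<le> 0" using assms by simp
  then have "max 0 (m - n) = 0" by (rule max.absorb1)
  then show ?thesis using True by simp
next
  case False then show ?thesis by simp
qed

context pdata
begin

definition mX :: "('a \<Rightarrow> real) \<Rightarrow> real" where
  "mX f = sum f ({v. f v \<noteq> 0} \<inter> (X - Y))"
definition mY :: "('a \<Rightarrow> real) \<Rightarrow> real" where
  "mY f = sum f ({v. f v \<noteq> 0} \<inter> (Y - X))"

definition rr :: "('a \<Rightarrow> real) \<Rightarrow> ('a \<Rightarrow> real)" where
  "rr f = (\<lambda>v. if v \<in> X - Y then hh (f v) (mX f) (mY f)
              else if v \<in> Y - X then hh (f v) (mY f) (mX f)
              else f v + (if v = aX then min (mX f) (mY f) else 0)
                       + (if v = aY then min (mX f) (mY f) else 0))"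

definition HH :: "real \<Rightarrow> ('a \<Rightarrow> real) \<Rightarrow> ('a \<Rightarrow> real)" where
  "HH t f = (\<lambda>v. f v + t * (rr f v - f v))"

lemma mX_eq:
  assumes "f \<in> closed_simplex \<sigma>" "finite \<sigma>" shows "mX f = sum f (\<sigma> \<inter> (X - Y))"
  unfolding mX_def
  by (rule sum.mono_neutral_left) (use assms cs_supp_sub in auto)

lemma mY_eq:
  assumes "f \<in> closed_simplex \<sigma>" "finite \<sigma>" shows "mY f = sum f (\<sigma> \<inter> (Y - X))"
  unfolding mY_def
  by (rule sum.mono_neutral_left) (use assms cs_supp_sub in auto)

lemma mX_nonneg: "f \<in> closed_simplex \<sigma> \<Longrightarrow> 0 \<le> mX f"
  unfolding mX_def using cs_nonneg by (metis (no_types, lifting) sum_nonneg)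

lemma mY_nonneg: "f \<in> closed_simplex \<sigma> \<Longrightarrow> 0 \<le> mY f"
  unfolding mY_def using cs_nonneg by (metis (no_types, lifting) sum_nonneg)

lemma le_mX:
  assumes "f \<in> closed_simplex \<sigma>" "finite \<sigma>" "v \<in> X - Y" shows "f v \<le> mX f"
proof (cases "v \<in> \<sigma>")
  case True
  then show ?thesis unfolding mX_eq[OF assms(1,2)]
    using assms cs_nonneg by (intro member_le_sum) auto
next
  case False then show ?thesis using cs_out[OF assms(1) False] mX_nonneg[OF assms(1)] by simp
qed

lemma le_mY:
  assumes "f \<in> closed_simplex \<sigma>" "finite \<sigma>" "v \<in> Y - X" shows "f v \<le> mY f"
proof (cases "v \<in> \<sigma>")
  case True
  then show ?thesis unfolding mY_eq[OF assms(1,2)]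
    using assms cs_nonneg by (intro member_le_sum) auto
next
  case False then show ?thesis using cs_out[OF assms(1) False] mY_nonneg[OF assms(1)] by simp
qed

lemma mX_zero:
  assumes "f \<in> closed_simplex \<sigma>" "finite \<sigma>" "mX f = 0" "v \<in> X - Y" shows "f v = 0"
  using le_mX[OF assms(1,2,4)] cs_nonneg[OF assms(1)] assms(3) by (metis order_antisym)

lemma mY_zero:
  assumes "f \<in> closed_simplex \<sigma>" "finite \<sigma>" "mY f = 0" "v \<in> Y - X" shows "f v = 0"
  using le_mY[OF assms(1,2,4)] cs_nonneg[OF assms(1)] assms(3) by (metis order_antisym)

lemma aXn: "aX \<notin> X - Y" "aX \<notin> Y - X" using aX by auto
lemma aYn: "aY \<notin> X - Y" "aY \<notin> Y - X" using aY by auto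

lemma rr_id:
  assumes f: "f \<in> closed_simplex \<sigma>" "finite \<sigma>" and m: "min (mX f) (mY f) = 0"
  shows "rr f = f"
proof
  fix v
  have x0: "0 \<le> mX f" "0 \<le> mY f" using mX_nonneg mY_nonneg f by blast+
  show "rr f v = f v"
  proof (cases "v \<in> X - Y")
    case True
    show ?thesis
    proof (cases "mX f = 0")
      case True
      then show ?thesis using mX_zero[OF f True \<open>v \<in> X - Y\<close>] \<open>v \<in> X - Y\<close>
        unfolding rr_def hh_def by simp
    next
      case False
      then have "mY f = 0" "mX f > 0" using m x0 by (auto simp: min_def split: if_splits)
      then show ?thesis using \<open>v \<in> X - Y\<close> unfolding rr_def hh_def by simp
    qed
  next
    case nX: False
    show ?thesis
    proof (cases "v \<in> Y - X")
      case True
      show ?thesis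
      proof (cases "mY f = 0")
        case True
        then show ?thesis using mY_zero[OF f True \<open>v \<in> Y - X\<close>] \<open>v \<in> Y - X\<close> nX
          unfolding rr_def hh_def by simp
      next
        case False
        then have "mX f = 0" "mY f > 0" using m x0 by (auto simp: min_def split: if_splits)
        then show ?thesis using \<open>v \<in> Y - X\<close> nX unfolding rr_def hh_def by simp
      qed
    next
      case False
      have "rr f v = f v + (if v = aX then min (mX f) (mY f) else 0) + (if v = aY then min (mX f) (mY f) else 0)"
        unfolding rr_def by (simp only: if_not_P[OF nX] if_not_P[OF False])
      then show ?thesis using m by simp
    qed
  qed
qed

lemma rr_cs:
  assumes f: "f \<in> closed_simplex \<sigma>" and fin: "finite \<sigma>"
  shows "rr f \<in> closed_simplex (\<sigma> \<union> {aX,aY})"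
proof -
  let ?\<tau> = "\<sigma> \<union> {aX,aY}"
  let ?m = "min (mX f) (mY f)"
  have x0: "0 \<le> mX f" "0 \<le> mY f" using mX_nonneg mY_nonneg f by blast+
  have nn: "0 \<le> rr f v" for v
    unfolding rr_def using x0 cs_nonneg[OF f, of v] by (auto intro!: hh_nonneg)
  have out: "rr f v = 0" if "v \<notin> ?\<tau>" for v
    using that cs_out[OF f, of v] unfolding rr_def hh_def by auto
  have fint: "finite ?\<tau>" using fin by simp
  have AB: "(X - Y) \<inter> (Y - X) = {}" by blast
  have P1: "?\<tau> \<inter> (X - Y) = \<sigma> \<inter> (X - Y)" and P2: "?\<tau> \<inter> (Y - X) = \<sigma> \<inter> (Y - X)"
    using aX aY by auto
  have aP3: "aX \<in> ?\<tau> - (X - Y) - (Y - X)" "aY \<in> ?\<tau> - (X - Y) - (Y - X)" using aX aY by auto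
  have s1: "sum (rr f) (?\<tau> \<inter> (X - Y)) = max 0 (mX f - mY f)"
  proof -
    have "sum (rr f) (?\<tau> \<inter> (X - Y)) = sum (\<lambda>v. f v * (max 0 (mX f - mY f) / mX f)) (\<sigma> \<inter> (X - Y))"
      unfolding P1 by (rule sum.cong) (auto simp: rr_def hh_def)
    also have "\<dots> = sum f (\<sigma> \<inter> (X - Y)) * (max 0 (mX f - mY f) / mX f)"
      by (rule sum_distrib_right[symmetric])
    also have "\<dots> = mX f * (max 0 (mX f - mY f) / mX f)"
      by (simp only: mX_eq[OF f fin, symmetric])
    also have "\<dots> = max 0 (mX f - mY f)" using mult_hh x0 by blast
    finally show ?thesis .
  qed
  have s2: "sum (rr f) (?\<tau> \<inter> (Y - X)) = max 0 (mY f - mX f)"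
  proof -
    have "sum (rr f) (?\<tau> \<inter> (Y - X)) = sum (\<lambda>v. f v * (max 0 (mY f - mX f) / mY f)) (\<sigma> \<inter> (Y - X))"
      unfolding P2 by (rule sum.cong) (auto simp: rr_def hh_def)
    also have "\<dots> = sum f (\<sigma> \<inter> (Y - X)) * (max 0 (mY f - mX f) / mY f)"
      by (rule sum_distrib_right[symmetric])
    also have "\<dots> = mY f * (max 0 (mY f - mX f) / mY f)"
      by (simp only: mY_eq[OF f fin, symmetric])
    also have "\<dots> = max 0 (mY f - mX f)" using mult_hh x0 by blast
    finally show ?thesis .
  qed
  have s3: "sum (rr f) (?\<tau> - (X - Y) - (Y - X)) = sum f (?\<tau> - (X - Y) - (Y - X)) + ?m + ?m"
  proof -
    have "sum (rr f) (?\<tau> - (X - Y) - (Y - X)) =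
       sum (\<lambda>v. f v + (if v = aX then ?m else 0) + (if v = aY then ?m else 0)) (?\<tau> - (X - Y) - (Y - X))"
      by (rule sum.cong) (auto simp: rr_def)
    also have "\<dots> = sum f (?\<tau> - (X - Y) - (Y - X)) + ?m + ?m"
      using fint aP3 by (simp add: sum.distrib)
    finally show ?thesis .
  qed
  have "sum f ?\<tau> = 1" using cs_grow[OF f fint] cs_sum by blast
  moreover have "sum f ?\<tau> = mX f + mY f + sum f (?\<tau> - (X - Y) - (Y - X))"
    using sum_split3[OF fint AB, of f] unfolding P1 P2 mX_eq[OF f fin] mY_eq[OF f fin] .
  moreover have "sum (rr f) ?\<tau> = max 0 (mX f - mY f) + max 0 (mY f - mX f) + (sum f (?\<tau> - (X - Y) - (Y - X)) + ?m + ?m)"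
    using sum_split3[OF fint AB, of "rr f"] s1 s2 s3 by simp
  ultimately have "sum (rr f) ?\<tau> = 1" by (simp add: max_def min_def)
  then show ?thesis using nn out unfolding closed_simplex_def by auto
qed

end

context pdata
begin

abbreviation LL where "LL \<equiv> full_sub K X \<union> full_sub K Y"

lemma LK: "LL \<subseteq> K" unfolding full_sub_def by auto

lemma scL: "simplicial_complex LL"
proof -
  have 1: "\<forall>\<sigma>\<in>LL. finite \<sigma> \<and> \<sigma> \<noteq> {}" using sc LK unfolding simplicial_complex_def by blast
  have 2: "\<forall>\<sigma>\<in>LL. \<forall>\<tau>. \<tau> \<subseteq> \<sigma> \<and> \<tau> \<noteq> {} \<longrightarrow> \<tau> \<in> LL"
  proof (intro ballI allI impI)
    fix \<sigma> \<tau> assume s: "\<sigma> \<in> LL" and t: "\<tau> \<subseteq> \<sigma> \<and> \<tau> \<noteq> {}"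
    then have "\<tau> \<in> K" using sc_sub[OF sc, of \<sigma> \<tau>] LK by blast
    then show "\<tau> \<in> LL" using s t unfolding full_sub_def by auto
  qed
  show ?thesis unfolding simplicial_complex_def using 1 2 by blast
qed

lemma carrier_LK: "realization_carrier LL \<subseteq> realization_carrier K"
  unfolding realization_carrier_def using LK by blast

lemma tauK:
  assumes s: "\<sigma> \<in> K" and f: "f \<in> closed_simplex \<sigma>" and m: "min (mX f) (mY f) \<noteq> 0"
  shows "\<sigma> \<union> {aX,aY} \<in> K"
proof -
  have fin: "finite \<sigma>" using sc_finite[OF sc s] .
  have x0: "0 \<le> mX f" "0 \<le> mY f" using mX_nonneg mY_nonneg f by blast+
  have "mX f \<noteq> 0"
  proof
    assume "mX f = 0"
    then have "min (mX f) (mY f) = 0" using x0 by (simp add: min_def)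
    then show False using m by simp
  qed
  moreover have "mY f \<noteq> 0"
  proof
    assume "mY f = 0"
    then have "min (mX f) (mY f) = 0" using x0 by (simp add: min_def)
    then show False using m by simp
  qed
  ultimately have "\<sigma> \<inter> (X - Y) \<noteq> {}" "\<sigma> \<inter> (Y - X) \<noteq> {}"
    using mX_eq[OF f fin] mY_eq[OF f fin] by auto
  then obtain x y where "x \<in> \<sigma>" "x \<in> X - Y" "y \<in> \<sigma>" "y \<in> Y - X" by blast
  then show ?thesis using key[OF s] by blast
qed

lemma rr_L:
  assumes s: "\<sigma> \<in> K" and f: "f \<in> closed_simplex \<sigma>"
  shows "\<exists>\<rho>\<in>LL. \<rho> \<subseteq> \<sigma> \<union> {aX,aY} \<and> rr f \<in> closed_simplex \<rho>"
proof -
  have fin: "finite \<sigma>" using sc_finite[OF sc s] .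
  have x0: "0 \<le> mX f" "0 \<le> mY f" using mX_nonneg mY_nonneg f by blast+
  show ?thesis
  proof (cases "min (mX f) (mY f) = 0")
    case True
    then have rf: "rr f = f" using rr_id[OF f fin] by blast
    define \<rho> where "\<rho> = {v. f v \<noteq> 0}"
    have fc: "f \<in> realization_carrier K" using closed_simplex_sub[OF sc s] f by blast
    have \<rho>K: "\<rho> \<in> K" and f\<rho>: "f \<in> closed_simplex \<rho>" using carrier_cs[OF fc] unfolding \<rho>_def by auto
    have \<rho>s: "\<rho> \<subseteq> \<sigma>" using cs_supp_sub[OF f] unfolding \<rho>_def .
    have \<rho>XY: "\<rho> \<subseteq> X \<union> Y" using \<rho>s vert[OF s] by blast
    have "\<rho> \<subseteq> Y \<or> \<rho> \<subseteq> X"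
    proof (cases "mX f = 0")
      case True
      have "v \<notin> X - Y" if "v \<in> \<rho>" for v
        using mX_zero[OF f fin True, of v] that unfolding \<rho>_def by auto
      then show ?thesis using \<rho>XY by blast
    next
      case False
      then have m0: "mY f = 0" using True x0 by (auto simp: min_def split: if_splits)
      have "v \<notin> Y - X" if "v \<in> \<rho>" for v
        using mY_zero[OF f fin m0, of v] that unfolding \<rho>_def by auto
      then show ?thesis using \<rho>XY by blast
    qed
    then have "\<rho> \<in> full_sub K Y \<or> \<rho> \<in> full_sub K X" using \<rho>K unfolding full_sub_def by simp
    then have \<rho>L: "\<rho> \<in> LL" by blast
    have "\<rho> \<subseteq> \<sigma> \<union> {aX,aY} \<and> rr f \<in> closed_simplex \<rho>" using rf f\<rho> \<rho>s by auto
    then show ?thesis using \<rho>L by blast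
  next
    case False
    let ?\<tau> = "\<sigma> \<union> {aX,aY}"
    have tK: "?\<tau> \<in> K" using tauK[OF s f False] .
    have fint: "finite ?\<tau>" using fin by simp
    have rt: "rr f \<in> closed_simplex ?\<tau>" using rr_cs[OF f fin] .
    have tXY: "?\<tau> \<subseteq> X \<union> Y" using vert[OF tK] by (simp add: subset_iff)
    show ?thesis
    proof (cases "mY f \<le> mX f")
      case True
      let ?\<rho> = "?\<tau> \<inter> X"
      have z: "rr f v = 0" if "v \<in> ?\<tau>" "v \<notin> ?\<rho>" for v
      proof -
        have v: "v \<notin> X - Y" "v \<in> Y - X" using that tXY by auto
        have "max 0 (mY f - mX f) = 0" using True by simp
        then show ?thesis using v unfolding rr_def hh_def by simp
      qed
      have "rr f \<in> closed_simplex ?\<rho>" by (rule cs_shrink[OF rt fint _ z]) auto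
      moreover have "?\<rho> \<in> K" using sc_sub[OF sc tK, of ?\<rho>] aX by blast
      then have "?\<rho> \<in> full_sub K X" unfolding full_sub_def by simp
      then have "?\<rho> \<in> LL" by simp
      moreover have "?\<rho> \<subseteq> \<sigma> \<union> {aX,aY}" by simp
      ultimately show ?thesis by (intro bexI[of _ ?\<rho>]) simp_all
    next
      case False
      let ?\<rho> = "?\<tau> \<inter> Y"
      have z: "rr f v = 0" if "v \<in> ?\<tau>" "v \<notin> ?\<rho>" for v
      proof -
        have v: "v \<in> X - Y" using that tXY by auto
        have "max 0 (mX f - mY f) = 0" using False by simp
        then show ?thesis using v unfolding rr_def hh_def by simp
      qed
      have "rr f \<in> closed_simplex ?\<rho>" by (rule cs_shrink[OF rt fint _ z]) auto
      moreover have "?\<rho> \<in> K" using sc_sub[OF sc tK, of ?\<rho>] aY by blast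
      then have "?\<rho> \<in> full_sub K Y" unfolding full_sub_def by simp
      then have "?\<rho> \<in> LL" by simp
      moreover have "?\<rho> \<subseteq> \<sigma> \<union> {aX,aY}" by simp
      ultimately show ?thesis by (intro bexI[of _ ?\<rho>]) simp_all
    qed
  qed
qed

lemma HH0[simp]: "HH 0 f = f" by (simp add: HH_def)
lemma HH1[simp]: "HH 1 f = rr f" by (simp add: HH_def)
lemma HH_fix: "rr f = f \<Longrightarrow> HH t f = f" by (simp add: HH_def)

lemma HH_K:
  assumes s: "\<sigma> \<in> K" and f: "f \<in> closed_simplex \<sigma>" and t: "t \<in> {0..1}"
  shows "\<exists>\<rho>\<in>K. \<rho> \<subseteq> \<sigma> \<union> {aX,aY} \<and> HH t f \<in> closed_simplex \<rho>"
proof -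
  have fin: "finite \<sigma>" using sc_finite[OF sc s] .
  show ?thesis
  proof (cases "min (mX f) (mY f) = 0")
    case True
    then have "rr f = f" by (rule rr_id[OF f fin])
    then have e: "HH t f = f" by (rule HH_fix)
    have "\<sigma> \<subseteq> \<sigma> \<union> {aX,aY} \<and> HH t f \<in> closed_simplex \<sigma>" unfolding e using f by auto
    then show ?thesis using s by blast
  next
    case False
    let ?\<tau> = "\<sigma> \<union> {aX,aY}"
    have tK: "?\<tau> \<in> K" using tauK[OF s f False] .
    have fint: "finite ?\<tau>" using fin by simp
    have fT: "f \<in> closed_simplex ?\<tau>" by (rule cs_grow[OF f fint]) blast
    have "HH t f \<in> closed_simplex ?\<tau>"
      unfolding HH_def by (rule cs_convex[OF fT rr_cs[OF f fin] t])
    then have "?\<tau> \<subseteq> \<sigma> \<union> {aX,aY} \<and> HH t f \<in> closed_simplex ?\<tau>" by simp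
    then show ?thesis using tK by blast
  qed
qed

lemma rr_fix:
  assumes f: "f \<in> realization_carrier LL" shows "rr f = f"
proof -
  define \<rho> where "\<rho> = {v. f v \<noteq> 0}"
  have \<rho>L: "\<rho> \<in> LL" and f\<rho>: "f \<in> closed_simplex \<rho>" using carrier_cs[OF f] unfolding \<rho>_def by auto
  have fin: "finite \<rho>" using sc_finite[OF scL \<rho>L] .
  have x0: "0 \<le> mX f" "0 \<le> mY f" using mX_nonneg mY_nonneg f\<rho> by blast+
  have "\<rho> \<subseteq> X \<or> \<rho> \<subseteq> Y" using \<rho>L unfolding full_sub_def by blast
  then have "mY f = 0 \<or> mX f = 0"
  proof
    assume "\<rho> \<subseteq> X"
    then have "\<rho> \<inter> (Y - X) = {}" by blast
    then show ?thesis using mY_eq[OF f\<rho> fin] by simp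
  next
    assume "\<rho> \<subseteq> Y"
    then have "\<rho> \<inter> (X - Y) = {}" by blast
    then show ?thesis using mX_eq[OF f\<rho> fin] by simp
  qed
  then have "min (mX f) (mY f) = 0" using x0 by (auto simp: min_def)
  then show ?thesis using rr_id[OF f\<rho> fin] by blast
qed

lemma proj_TS: "continuous_map (TS \<sigma>) euclideanreal (\<lambda>f. f v)"
  by (rule continuous_map_from_subtopology[OF proj_cont])

lemma mX_cont: assumes "\<sigma> \<in> K" shows "continuous_map (TS \<sigma>) euclideanreal mX"
proof (rule continuous_map_eq)
  have fin: "finite \<sigma>" using sc_finite[OF sc assms] .
  show "continuous_map (TS \<sigma>) euclideanreal (\<lambda>f. sum f (\<sigma> \<inter> (X - Y)))"
  proof -
    have "continuous_map (TS \<sigma>) euclideanreal (\<lambda>x. sum (\<lambda>i. x i) (\<sigma> \<inter> (X - Y)))"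
      by (rule continuous_map_sum) (use fin proj_TS in auto)
    then show ?thesis by simp
  qed
  show "\<And>f. f \<in> topspace (TS \<sigma>) \<Longrightarrow> sum f (\<sigma> \<inter> (X - Y)) = mX f"
    using mX_eq fin by simp
qed

lemma mY_cont: assumes "\<sigma> \<in> K" shows "continuous_map (TS \<sigma>) euclideanreal mY"
proof (rule continuous_map_eq)
  have fin: "finite \<sigma>" using sc_finite[OF sc assms] .
  show "continuous_map (TS \<sigma>) euclideanreal (\<lambda>f. sum f (\<sigma> \<inter> (Y - X)))"
  proof -
    have "continuous_map (TS \<sigma>) euclideanreal (\<lambda>x. sum (\<lambda>i. x i) (\<sigma> \<inter> (Y - X)))"
      by (rule continuous_map_sum) (use fin proj_TS in auto)
    then show ?thesis by simp
  qed
  show "\<And>f. f \<in> topspace (TS \<sigma>) \<Longrightarrow> sum f (\<sigma> \<inter> (Y - X)) = mY f"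
    using mY_eq fin by simp
qed

lemma rr_cont_v: assumes s: "\<sigma> \<in> K" shows "continuous_map (TS \<sigma>) euclideanreal (\<lambda>f. rr f v)"
proof -
  have fin: "finite \<sigma>" using sc_finite[OF sc s] .
  note cX = mX_cont[OF s] and cY = mY_cont[OF s]
  show ?thesis
  proof (cases "v \<in> X - Y")
    case True
    have "continuous_map (TS \<sigma>) euclideanreal (\<lambda>f. hh (f v) (mX f) (mY f))"
      by (rule hh_cont[OF proj_TS cX cY]) (use cs_nonneg le_mX[OF _ fin True] mY_nonneg in auto)
    then show ?thesis by (rule continuous_map_eq) (use True in \<open>simp add: rr_def\<close>)
  next
    case nX: False
    show ?thesis
    proof (cases "v \<in> Y - X")
      case True
      have "continuous_map (TS \<sigma>) euclideanreal (\<lambda>f. hh (f v) (mY f) (mX f))"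
        by (rule hh_cont[OF proj_TS cY cX]) (use cs_nonneg le_mY[OF _ fin True] mX_nonneg in auto)
      then show ?thesis by (rule continuous_map_eq) (use True nX in \<open>simp add: rr_def\<close>)
    next
      case False
      have cm: "continuous_map (TS \<sigma>) euclideanreal (\<lambda>f. min (mX f) (mY f))"
        by (rule continuous_map_real_min[OF cX cY])
      have c1: "continuous_map (TS \<sigma>) euclideanreal (\<lambda>f. if v = aX then min (mX f) (mY f) else 0)"
        by (cases "v = aX") (simp_all add: cm)
      have c2: "continuous_map (TS \<sigma>) euclideanreal (\<lambda>f. if v = aY then min (mX f) (mY f) else 0)"
        by (cases "v = aY") (simp_all add: cm)
      have "continuous_map (TS \<sigma>) euclideanreal
          (\<lambda>f. f v + (if v = aX then min (mX f) (mY f) else 0) + (if v = aY then min (mX f) (mY f) else 0))"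
        by (intro continuous_map_add proj_TS c1 c2)
      then show ?thesis
      proof (rule continuous_map_eq)
        fix f
        show "f v + (if v = aX then min (mX f) (mY f) else 0) + (if v = aY then min (mX f) (mY f) else 0) = rr f v"
          unfolding rr_def by (simp only: if_not_P[OF nX] if_not_P[OF False])
      qed
    qed
  qed
qed

lemma rr_cont: assumes s: "\<sigma> \<in> K" shows "continuous_map (TS \<sigma>) (powertop_real UNIV) rr"
  unfolding continuous_map_componentwise_UNIV using rr_cont_v[OF s] by blast

lemma HH_cont:
  assumes s: "\<sigma> \<in> K"
  shows "continuous_map (prod_topology (top_of_set {0..1::real}) (TS \<sigma>)) (powertop_real UNIV) (\<lambda>p. HH (fst p) (snd p))"
  unfolding continuous_map_componentwise_UNIV
proof
  fix v
  have cf: "continuous_map (prod_topology (top_of_set {0..1::real}) (TS \<sigma>)) euclideanreal fst"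
    using continuous_map_fst[of "top_of_set {0..1::real}" "TS \<sigma>"] continuous_map_in_subtopology by blast
  have cs: "continuous_map (prod_topology (top_of_set {0..1::real}) (TS \<sigma>)) euclideanreal (\<lambda>p. snd p v)"
    using continuous_map_compose[OF continuous_map_snd proj_TS] by (simp add: o_def)
  have cr: "continuous_map (prod_topology (top_of_set {0..1::real}) (TS \<sigma>)) euclideanreal (\<lambda>p. rr (snd p) v)"
    using continuous_map_compose[OF continuous_map_snd rr_cont_v[OF s]] by (simp add: o_def)
  show "continuous_map (prod_topology (top_of_set {0..1::real}) (TS \<sigma>)) euclideanreal (\<lambda>p. HH (fst p) (snd p) v)"
    unfolding HH_def by (intro continuous_map_add continuous_map_real_mult continuous_map_diff cf cs cr)
qed

lemma fin_T: "finite \<sigma> \<Longrightarrow> finite {\<rho>\<in>M. \<rho> \<subseteq> \<sigma> \<union> {aX,aY}}"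
  by (rule finite_subset[of _ "Pow (\<sigma> \<union> {aX,aY})"]) auto

lemma rr_gr: "continuous_map (geometric_realization K) (geometric_realization LL) rr"
proof (rule cont_out_gr[OF sc])
  fix \<sigma> assume s: "\<sigma> \<in> K"
  show "continuous_map (TS \<sigma>) (geometric_realization LL) rr"
  proof (rule cont_into_gr[OF scL fin_T[OF sc_finite[OF sc s]] _ rr_cont[OF s]])
    show "{\<rho> \<in> LL. \<rho> \<subseteq> \<sigma> \<union> {aX, aY}} \<subseteq> LL" by blast
    fix z assume "z \<in> topspace (TS \<sigma>)"
    then show "\<exists>\<tau>\<in>{\<rho> \<in> LL. \<rho> \<subseteq> \<sigma> \<union> {aX, aY}}. rr z \<in> closed_simplex \<tau>"
      using rr_L[OF s] by auto
  qed
next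
  fix x assume x: "x \<in> realization_carrier K"
  obtain \<rho> where "\<rho> \<in> LL" "rr x \<in> closed_simplex \<rho>"
    using rr_L carrier_cs[OF x] by blast
  then show "rr x \<in> topspace (geometric_realization LL)"
    using closed_simplex_sub[OF scL] topspace_gr[OF scL] by blast
qed

lemma HH_gr: "continuous_map (prod_topology (top_of_set {0..1::real}) (geometric_realization K)) (geometric_realization K) (\<lambda>p. HH (fst p) (snd p))"
proof (rule cont_out_gr_prod[OF sc])
  fix \<sigma> assume s: "\<sigma> \<in> K"
  show "continuous_map (prod_topology (top_of_set {0..1}) (TS \<sigma>)) (geometric_realization K) (\<lambda>p. HH (fst p) (snd p))"
  proof (rule cont_into_gr[OF sc fin_T[OF sc_finite[OF sc s]] _ HH_cont[OF s]])
    show "{\<rho> \<in> K. \<rho> \<subseteq> \<sigma> \<union> {aX, aY}} \<subseteq> K" by blast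
    fix z assume "z \<in> topspace (prod_topology (top_of_set {0..1::real}) (TS \<sigma>))"
    then have "fst z \<in> {0..1}" "snd z \<in> closed_simplex \<sigma>" by auto
    then show "\<exists>\<tau>\<in>{\<rho> \<in> K. \<rho> \<subseteq> \<sigma> \<union> {aX, aY}}. HH (fst z) (snd z) \<in> closed_simplex \<tau>"
      using HH_K[OF s] by blast
  qed
next
  fix t x assume t: "t \<in> {0..1::real}" and x: "x \<in> realization_carrier K"
  obtain \<rho> where "\<rho> \<in> K" "HH t x \<in> closed_simplex \<rho>"
    using HH_K[OF _ _ t] carrier_cs[OF x] by blast
  then show "HH (fst (t, x)) (snd (t, x)) \<in> topspace (geometric_realization K)"
    using closed_simplex_sub[OF sc] topspace_gr[OF sc] by auto
qed

lemma id_gr: "continuous_map (geometric_realization LL) (geometric_realization K) id"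
proof (rule cont_out_gr[OF scL])
  fix \<sigma> assume s: "\<sigma> \<in> LL"
  show "continuous_map (TS \<sigma>) (geometric_realization K) id"
  proof (rule cont_into_gr[OF sc, of "{\<sigma>}"])
    show "continuous_map (TS \<sigma>) (powertop_real UNIV) id"
      by (rule continuous_map_from_subtopology[OF continuous_map_id])
  qed (use s LK in auto)
next
  fix x assume "x \<in> realization_carrier LL"
  then show "id x \<in> topspace (geometric_realization K)"
    using carrier_LK topspace_gr[OF sc] by auto
qed

end

lemma rev01: "continuous_map (top_of_set {0..1::real}) (top_of_set {0..1::real}) (\<lambda>s. 1 - s)"
  unfolding continuous_map_in_subtopology
  by (auto intro!: continuous_map_from_subtopology continuous_intros)

context pdata
begin

lemma HH_rev_cont:
  assumes g: "continuous_map S (geometric_realization K) g"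
  shows "continuous_map (prod_topology (top_of_set {0..1::real}) S) (geometric_realization K)
           (\<lambda>p. HH (1 - fst p) (g (snd p)))"
proof -
  have i: "continuous_map (prod_topology (top_of_set {0..1::real}) S)
             (prod_topology (top_of_set {0..1::real}) (geometric_realization K)) (\<lambda>p. (1 - fst p, g (snd p)))"
  proof (intro continuous_map_pairedI)
    show "continuous_map (prod_topology (top_of_set {0..1::real}) S) (top_of_set {0..1}) (\<lambda>p. 1 - fst p)"
      using continuous_map_compose[OF continuous_map_fst rev01] by (simp add: o_def)
    show "continuous_map (prod_topology (top_of_set {0..1::real}) S) (geometric_realization K) (\<lambda>p. g (snd p))"
      using continuous_map_compose[OF continuous_map_snd g] by (simp add: o_def)
  qed
  show ?thesis using continuous_map_compose[OF i HH_gr] by (simp add: o_def)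
qed

lemma weq: "weak_homotopy_equivalence (geometric_realization LL) (geometric_realization K) id"
  unfolding weak_homotopy_equivalence_def
proof (intro conjI ballI allI impI)
  show "continuous_map (geometric_realization LL) (geometric_realization K) id" by (rule id_gr)
next
  fix y assume y: "y \<in> topspace (geometric_realization K)"
  have yc: "y \<in> realization_carrier K" using y topspace_gr[OF sc] by simp
  have rx: "rr y \<in> topspace (geometric_realization LL)"
    using continuous_map_image_subset_topspace[OF rr_gr] y by blast
  have "path_component_of (geometric_realization K) (id (rr y)) y"
    unfolding path_component_of_def
  proof (intro exI conjI)
    have "continuous_map (prod_topology (top_of_set {0..1::real}) (top_of_set {0..1::real})) (geometric_realization K)
           (\<lambda>p. HH (1 - fst p) ((\<lambda>s. y) (snd p)))"
      by (rule HH_rev_cont) (use y in simp)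
    moreover have "continuous_map (top_of_set {0..1::real}) (prod_topology (top_of_set {0..1::real}) (top_of_set {0..1::real})) (\<lambda>s. (s, s))"
      by (rule continuous_map_pairedI) (simp_all only: continuous_map_id[unfolded id_def])
    ultimately have c: "continuous_map (top_of_set {0..1::real}) (geometric_realization K) ((\<lambda>p. HH (1 - fst p) y) \<circ> (\<lambda>s. (s, s)))"
      using continuous_map_compose by blast
    show "pathin (geometric_realization K) (\<lambda>s. HH (1 - s) y)"
      unfolding pathin_def using c by (simp add: o_def)
    show "HH (1 - 0) y = id (rr y)" by simp
    show "HH (1 - 1) y = y" by simp
  qed
  then show "\<exists>x\<in>topspace (geometric_realization LL). path_component_of (geometric_realization K) (id x) y"
    using rx by blast
next
  fix x1 x2 assume x1: "x1 \<in> topspace (geometric_realization LL)" and x2: "x2 \<in> topspace (geometric_realization LL)"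
    and p: "path_component_of (geometric_realization K) (id x1) (id x2)"
  have f1: "rr x1 = x1" and f2: "rr x2 = x2" using rr_fix x1 x2 topspace_gr[OF scL] by auto
  obtain g where g: "pathin (geometric_realization K) g" "g 0 = x1" "g 1 = x2"
    using p unfolding path_component_of_def by auto
  have "pathin (geometric_realization LL) (rr \<circ> g)" by (rule pathin_compose[OF g(1) rr_gr])
  then show "path_component_of (geometric_realization LL) x1 x2"
    unfolding path_component_of_def using g f1 f2 by (intro exI[of _ "rr \<circ> g"]) simp
next
  fix n :: nat and x assume n1: "1 \<le> n" and x: "x \<in> topspace (geometric_realization LL)"
  have fx: "rr x = x" using rr_fix x topspace_gr[OF scL] by auto
  let ?S = "nsphere n" and ?b = sphere_base
  show "\<exists>h. continuous_map ?S (geometric_realization LL) h \<and> h ?b = x \<and>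
             homotopic_with (\<lambda>k. k ?b = id x) ?S (geometric_realization K) (id \<circ> h) g"
    if a: "continuous_map ?S (geometric_realization K) g \<and> g ?b = id x" for g
  proof -
    from a have g: "continuous_map ?S (geometric_realization K) g" and gb: "g ?b = x" by auto
    have "continuous_map ?S (geometric_realization LL) (rr \<circ> g)" by (rule continuous_map_compose[OF g rr_gr])
    moreover have "(rr \<circ> g) ?b = x" using gb fx by simp
    moreover have "homotopic_with (\<lambda>k. k ?b = id x) ?S (geometric_realization K) (id \<circ> (rr \<circ> g)) g"
      unfolding homotopic_with_def
    proof (rule exI[of _ "\<lambda>p. HH (1 - fst p) (g (snd p))"], intro conjI)
      show "continuous_map (prod_topology (top_of_set {0..1}) ?S) (geometric_realization K)
              (\<lambda>p. HH (1 - fst p) (g (snd p)))" by (rule HH_rev_cont[OF g])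
      show "\<forall>z. HH (1 - fst (0::real, z)) (g (snd (0::real, z))) = (id \<circ> (rr \<circ> g)) z" by simp
      show "\<forall>z. HH (1 - fst (1::real, z)) (g (snd (1::real, z))) = g z" by simp
      show "\<forall>t\<in>{0..1::real}. HH (1 - fst (t, ?b)) (g (snd (t, ?b))) = id x"
        using gb fx HH_fix by simp
    qed
    ultimately show "\<exists>h. continuous_map ?S (geometric_realization LL) h \<and> h ?b = x \<and>
             homotopic_with (\<lambda>k. k ?b = id x) ?S (geometric_realization K) (id \<circ> h) g" by blast
  qed
  show "homotopic_with (\<lambda>k. k ?b = x) ?S (geometric_realization LL) h1 h2"
    if a: "continuous_map ?S (geometric_realization LL) h1 \<and> h1 ?b = x \<and>
        continuous_map ?S (geometric_realization LL) h2 \<and> h2 ?b = x \<and>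
        homotopic_with (\<lambda>k. k ?b = id x) ?S (geometric_realization K) (id \<circ> h1) (id \<circ> h2)" for h1 h2
  proof -
    from a have h1: "continuous_map ?S (geometric_realization LL) h1" "h1 ?b = x"
      and h2: "continuous_map ?S (geometric_realization LL) h2" "h2 ?b = x"
      and hom: "homotopic_with (\<lambda>k. k ?b = id x) ?S (geometric_realization K) (id \<circ> h1) (id \<circ> h2)"
      by auto
    have "homotopic_with (\<lambda>k. k ?b = x) ?S (geometric_realization LL) (rr \<circ> (id \<circ> h1)) (rr \<circ> (id \<circ> h2))"
      by (rule homotopic_with_compose_continuous_map_left[OF hom rr_gr]) (use fx in simp)
    moreover have "homotopic_with (\<lambda>k. k ?b = x) ?S (geometric_realization LL) h1 (rr \<circ> (id \<circ> h1))"
    proof (rule homotopic_with_equal)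
      fix z assume "z \<in> topspace ?S"
      then have "h1 z \<in> realization_carrier LL"
        using continuous_map_image_subset_topspace[OF h1(1)] topspace_gr[OF scL] by blast
      then show "h1 z = (rr \<circ> (id \<circ> h1)) z" using rr_fix by simp
    qed (use h1 fx in simp_all)
    moreover have "homotopic_with (\<lambda>k. k ?b = x) ?S (geometric_realization LL) h2 (rr \<circ> (id \<circ> h2))"
    proof (rule homotopic_with_equal)
      fix z assume "z \<in> topspace ?S"
      then have "h2 z \<in> realization_carrier LL"
        using continuous_map_image_subset_topspace[OF h2(1)] topspace_gr[OF scL] by blast
      then show "h2 z = (rr \<circ> (id \<circ> h2)) z" using rr_fix by simp
    qed (use h2 fx in simp_all)
    ultimately show "homotopic_with (\<lambda>k. k ?b = x) ?S (geometric_realization LL) h1 h2"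
      by (meson homotopic_with_sym homotopic_with_trans)
  qed
qed

end

theorem proposition9p6:
  fixes K :: "'a set set" and X Y :: "'a set" and aX aY :: 'a
  assumes "simplicial_complex K" and "clique_complex K"
    and "X \<union> Y = vertices K"
    and "aX \<in> X \<inter> Y" and "aY \<in> X \<inter> Y"
    and "\<And>\<tau>. \<tau> \<in> edges K \<Longrightarrow> card (\<tau> \<inter> (X \<inter> Y)) = 1 \<Longrightarrow>
            card (\<tau> \<inter> (X - (X \<inter> Y))) = 1 \<Longrightarrow> \<tau> \<union> {aX} \<in> K"
    and "\<And>\<tau>. \<tau> \<in> edges K \<Longrightarrow> card (\<tau> \<inter> (X \<inter> Y)) = 1 \<Longrightarrow>
            card (\<tau> \<inter> (Y - (X \<inter> Y))) = 1 \<Longrightarrow> \<tau> \<union> {aY} \<in> K"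
    and "\<And>\<tau>. \<tau> \<in> edges K - {\<sigma>\<in>K. \<sigma> \<subseteq> X \<or> \<sigma> \<subseteq> Y \<or> \<sigma> \<inter> (X \<inter> Y) \<noteq> {}} \<Longrightarrow>
            \<tau> \<union> {aX, aY} \<in> K"
  shows "(\<forall>\<sigma>\<in>K - {\<sigma>\<in>K. \<sigma> \<subseteq> X \<or> \<sigma> \<subseteq> Y \<or> \<sigma> \<inter> (X \<inter> Y) \<noteq> {}}.
            central_simplex (St K \<sigma> (X \<inter> Y)) {aX, aY})
         \<and> weak_homotopy_equivalence
             (geometric_realization (full_sub K X \<union> full_sub K Y))
             (geometric_realization K) id"
proof -
  interpret pdata K X Y aX aY
    by (rule pdata.intro) (use assms in auto)
  show ?thesis using central_part weq by blast
qed

end
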